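(* Let $\mathds J=[0,\infty)$ and consider $\dot x(t)=A(t)x(t)$, $y(t)=C(t)x(t)$ with $x(t)\in\mathbb R^n$, $y(t)\in\mathbb R^p$, where $A(t)$, $C(t)$ are continuous and uniformly bounded on $\mathds J$. Suppose $\dot x(t)=A(t)x(t)$ admits an exponential dichotomy on $\mathds J$ with projection $P=0$. Then the pair $(A(t),C(t))$ is uniformly exponentially detectable if and only if it is uniformly completely observable.
   Context: $\Phi(t,t_0)=X(t)X^{-1}(t_0)$ denotes the state transition matrix of $\dot x=A(t)x$, where $X$ is a nonsingular fundamental matrix solution of $\dot X=AX$. Uniform exponential stability: there exist $\mu>0$, $K\ge1$ with $\|\Phi(t,t_0)\|\le Ke^{-\mu(t-t_0)}$ for all $t_0\in\mathds J$, $t\ge t_0$. Exponential dichotomy on $\mathds J$ with projection $P$ ($P^2=P$): there exist $K\ge1$, $\alpha>0$ and a fundamental matrix solution $X(t)$ with $\|X(t)PX^{-1}(t_0)\|\le Ke^{-\alpha(t-t_0)}$ for $t\ge t_0\ge0$ and $\|X(t)(I_n-P)X^{-1}(t_0)\|\le Ke^{\alpha(t-t_0)}$ for $0\le t\le t_0$. Uniform complete observability: with $M(t_1,t_0)=\int_{t_0}^{t_1}\Phi^\top(s,t_0)C^\top(s)C(s)\Phi(s,t_0)\,ds$, there exist $\beta_1,\beta_2,\sigma>0$ with $\beta_1 I_n\preceq M(t_0+\sigma,t_0)\preceq\beta_2 I_n$ for all $t_0\in\mathds J$. Uniform exponential detectability: there exists a uniformly bounded gain $L(t)$ such that $\dot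 e=[A(t)-L(t)C(t)]e$ is uniformly exponentially stable. *)

theory Defs
  imports "HOL-Analysis.Analysis"
begin

text \<open>Time interval J = [0, infinity) is {0..}. Matrices are Cartesian
  matrices real^'n^'m; the state dimension is the finite type 'n.\<close>

definition uniformly_bounded :: "(real \<Rightarrow> real^'a^'b) \<Rightarrow> bool" where
  "uniformly_bounded F \<longleftrightarrow> bounded (F ` {0..})"

definition fundamental_matrix :: "(real \<Rightarrow> real^'n^'n) \<Rightarrow> (real \<Rightarrow> real^'n^'n) \<Rightarrow> bool" where
  "fundamental_matrix A X \<longleftrightarrow>
     (\<forall>t\<ge>0. (X has_vector_derivative (A t ** X t)) (at t within {0..}) \<and> invertible (X t))"

definition trans_mat :: "(real \<Rightarrow> real^'n^'n) \<Rightarrow> real \<Rightarrow> real \<Rightarrow> real^'n^'n" where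
  "trans_mat X t t0 = X t ** matrix_inv (X t0)"

definition unif_exp_stable :: "(real \<Rightarrow> real^'n^'n) \<Rightarrow> bool" where
  "unif_exp_stable A \<longleftrightarrow>
     (\<exists>X. fundamental_matrix A X \<and>
       (\<exists>\<mu>>0. \<exists>K\<ge>1. \<forall>t0\<ge>0. \<forall>t\<ge>t0. norm (trans_mat X t t0) \<le> K * exp (- \<mu> * (t - t0))))"

definition exp_dichotomy :: "(real \<Rightarrow> real^'n^'n) \<Rightarrow> real^'n^'n \<Rightarrow> bool" where
  "exp_dichotomy A P \<longleftrightarrow> P ** P = P \<and>
     (\<exists>K\<ge>1. \<exists>\<alpha>>0. \<exists>X. fundamental_matrix A X \<and>
        (\<forall>t0\<ge>0. \<forall>t\<ge>t0. norm (X t ** P ** matrix_inv (X t0)) \<le> K * exp (- \<alpha> * (t - t0))) \<and>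
        (\<forall>t0 t. 0 \<le> t \<longrightarrow> t \<le> t0 \<longrightarrow>
            norm (X t ** (mat 1 - P) ** matrix_inv (X t0)) \<le> K * exp (\<alpha> * (t - t0))))"

definition obs_gramian :: "(real \<Rightarrow> real^'n^'n) \<Rightarrow> (real \<Rightarrow> real^'n^'p) \<Rightarrow> real \<Rightarrow> real \<Rightarrow> real^'n^'n" where
  "obs_gramian X C t1 t0 = integral {t0..t1}
     (\<lambda>s. transpose (trans_mat X s t0) ** transpose (C s) ** C s ** trans_mat X s t0)"

text \<open>Loewner order b I <= M and M <= b I, written via quadratic forms.\<close>
definition unif_complete_obs :: "(real \<Rightarrow> real^'n^'n) \<Rightarrow> (real \<Rightarrow> real^'n^'p) \<Rightarrow> bool" where
  "unif_complete_obs A C \<longleftrightarrow>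
     (\<exists>X. fundamental_matrix A X \<and>
       (\<exists>\<beta>1>0. \<exists>\<beta>2>0. \<exists>\<sigma>>0. \<forall>t0\<ge>0. \<forall>v::real^'n.
          \<beta>1 * (v \<bullet> v) \<le> v \<bullet> (obs_gramian X C (t0 + \<sigma>) t0 *v v) \<and>
          v \<bullet> (obs_gramian X C (t0 + \<sigma>) t0 *v v) \<le> \<beta>2 * (v \<bullet> v)))"

text \<open>Gains are taken continuous (so that the error system has classical solutions).\<close>
definition unif_exp_detectable :: "(real \<Rightarrow> real^'n^'n) \<Rightarrow> (real \<Rightarrow> real^'n^'p) \<Rightarrow> bool" where
  "unif_exp_detectable A C \<longleftrightarrow>
     (\<exists>L :: real \<Rightarrow> real^'p^'n. continuous_on {0..} L \<and> uniformly_bounded L \<and>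
        unif_exp_stable (\<lambda>t. A t - L t ** C t))"

end

theory Submission
  imports Defs
begin
lemma mm_rdistrib: "((A::real^'n^'m) + B) ** (C::real^'k^'n) = A ** C + B ** C"
  by (simp add: matrix_matrix_mult_def vec_eq_iff sum.distrib algebra_simps)

lemma mm_diff_rdistrib: "((A::real^'n^'m) - B) ** (C::real^'k^'n) = A ** C - B ** C"
  by (simp add: matrix_matrix_mult_def vec_eq_iff sum_subtractf algebra_simps)

lemma mm_diff_ldistrib: "(A::real^'n^'m) ** ((B::real^'k^'n) - C) = A ** B - A ** C"
  by (simp add: matrix_matrix_mult_def vec_eq_iff sum_subtractf algebra_simps)

lemma mm_scale_l: "(c *\<^sub>R (A::real^'n^'m)) ** (B::real^'k^'n) = c *\<^sub>R (A ** B)"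
  by (simp add: scalar_matrix_assoc)

lemma mm_scale_r: "(A::real^'n^'m) ** (c *\<^sub>R (B::real^'k^'n)) = c *\<^sub>R (A ** B)"
  by (simp add: matrix_scalar_ac scalar_matrix_assoc)

lemma mm_zero_l[simp]: "(0::real^'n^'m) ** (B::real^'k^'n) = 0"
  by (simp add: matrix_matrix_mult_def vec_eq_iff)

lemma mm_zero_r[simp]: "(A::real^'n^'m) ** (0::real^'k^'n) = 0"
  by (simp add: matrix_matrix_mult_def vec_eq_iff)

lemma mv_scale_l: "(c *\<^sub>R (A::real^'n^'m)) *v x = c *\<^sub>R (A *v x)"
  by (simp add: matrix_vector_mult_def vec_eq_iff sum_distrib_left algebra_simps)

lemma bb_mm: "bounded_bilinear (\<lambda>(A::real^'n^'m) (B::real^'k^'n). A ** B)"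
  unfolding bilinear_conv_bounded_bilinear[symmetric] bilinear_def
  by (auto simp: linear_iff matrix_add_ldistrib mm_rdistrib mm_scale_l mm_scale_r)

lemma bb_mv: "bounded_bilinear (\<lambda>(A::real^'n^'m) (x::real^'n). A *v x)"
  unfolding bilinear_conv_bounded_bilinear[symmetric] bilinear_def
  by (auto simp: linear_iff matrix_vector_right_distrib matrix_vector_mult_add_rdistrib
       matrix_vector_mult_scaleR mv_scale_l)

lemma bl_transpose: "bounded_linear (transpose :: real^'n^'m \<Rightarrow> real^'m^'n)"
  unfolding linear_conv_bounded_linear[symmetric]
  by (auto simp: linear_iff transpose_def vec_eq_iff)

lemma minv: assumes "invertible (X::real^'n^'n)"
  shows "X ** matrix_inv X = mat 1" "matrix_inv X ** X = mat 1"
  using someI_ex[OF assms[unfolded invertible_def]] unfolding matrix_inv_def by auto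

lemma minv_unique: assumes "invertible (X::real^'n^'n)" "X ** Y = mat 1"
  shows "matrix_inv X = Y"
  by (metis assms minv(2) matrix_mul_assoc matrix_mul_lid matrix_mul_rid)

lemma invertible_minv: "invertible (X::real^'n^'n) \<Longrightarrow> invertible (matrix_inv X)"
  using minv invertible_def by blast

lemma minv_minv: "invertible (X::real^'n^'n) \<Longrightarrow> matrix_inv (matrix_inv X) = X"
  by (meson invertible_minv minv(2) minv_unique)

lemma minv_mult: assumes "invertible (X::real^'n^'n)" "invertible (Y::real^'n^'n)"
  shows "matrix_inv (X ** Y) = matrix_inv Y ** matrix_inv X"
proof (rule minv_unique[where X="X ** Y"])
  show "invertible (X ** Y)" using assms invertible_mult by blast
  have "X ** Y ** (matrix_inv Y ** matrix_inv X) = X ** (Y ** matrix_inv Y) ** matrix_inv X"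
    by (simp add: matrix_mul_assoc)
  then show "X ** Y ** (matrix_inv Y ** matrix_inv X) = mat 1" using assms by (simp add: minv)
qed

lemma minv_vec: assumes "invertible (X::real^'n^'n)"
  shows "X *v (matrix_inv X *v v) = v" "matrix_inv X *v (X *v v) = v"
  using assms by (simp_all add: matrix_vector_mul_assoc minv)

lemma inj_invertible: assumes "\<And>v. (X::real^'n^'n) *v v = 0 \<Longrightarrow> v = 0"
  shows "invertible X"
proof -
  have "inj ((*v) X)"
    by (rule injI) (metis assms eq_iff_diff_eq_0 matrix_vector_mult_diff_distrib)
  then show ?thesis using matrix_left_invertible_injective invertible_left_inverse by blast
qed

lemma norm_mv: "norm ((A::real^'n^'m) *v x) \<le> norm A * norm x"
proof -
  have "norm (A *v x) = L2_set (\<lambda>i. \<bar>A$i \<bullet> x\<bar>) UNIV"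
    by (simp add: norm_vec_def matrix_vector_mul_component)
  also have "\<dots> \<le> L2_set (\<lambda>i. norm (A$i) * norm x) UNIV"
    by (rule L2_set_mono) (auto simp: Cauchy_Schwarz_ineq2)
  also have "\<dots> = norm A * norm x"
    by (simp add: norm_vec_def L2_set_left_distrib)
  finally show ?thesis .
qed

lemma norm_sq_mat: "(norm (A::real^'n^'m))^2 = (\<Sum>i\<in>UNIV. \<Sum>j\<in>UNIV. (A$i$j)^2)"
proof -
  have "(norm A)^2 = inner A A" by (simp add: power2_norm_eq_inner)
  then show ?thesis by (simp add: inner_vec_def power2_eq_square)
qed

lemma norm_transpose: "norm (transpose (A::real^'n^'m)) = norm A"
proof -
  have "(norm (transpose A))^2 = (norm A)^2"
    unfolding norm_sq_mat transpose_def by (simp, rule sum.swap)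
  then show ?thesis by (simp add: power2_eq_iff_nonneg)
qed

lemma norm_mm: "norm ((A::real^'n^'m) ** (B::real^'k^'n)) \<le> norm A * norm B"
proof -
  have row: "(A ** B)$i = transpose B *v (A$i)" for i
    by (simp add: matrix_matrix_mult_def matrix_vector_mult_def transpose_def vec_eq_iff mult.commute)
  have "norm (A ** B) = L2_set (\<lambda>i. norm ((A ** B)$i)) UNIV"
    by (simp add: norm_vec_def)
  also have "\<dots> \<le> L2_set (\<lambda>i. norm (A$i) * norm B) UNIV"
  proof (rule L2_set_mono)
    fix i
    have "norm ((A ** B)$i) \<le> norm (transpose B) * norm (A$i)" unfolding row by (rule norm_mv)
    then show "norm ((A ** B)$i) \<le> norm (A$i) * norm B" by (simp add: norm_transpose mult.commute)
  qed auto
  also have "\<dots> = norm A * norm B"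
    by (simp add: norm_vec_def L2_set_left_distrib)
  finally show ?thesis .
qed

lemma norm_mat_le_cols: assumes "\<And>x. norm ((A::real^'n^'m) *v x) \<le> c * norm x"
  shows "norm A \<le> real CARD('m) * real CARD('n) * c"
proof -
  have c0: "c \<ge> 0" using assms[of "axis undefined 1"]
    by (metis norm_axis_1 mult.right_neutral norm_ge_zero order_trans)
  have ij: "\<bar>A$i$j\<bar> \<le> c" for i j
  proof -
    have "A$i$j = (A *v axis j 1)$i"
      by (simp add: matrix_vector_mult_def axis_def if_distrib if_distribR cong: if_cong)
    then have "\<bar>A$i$j\<bar> \<le> norm (A *v axis j 1)" by (simp add: component_le_norm_cart)
    also have "\<dots> \<le> c" using assms[of "axis j 1"] by (simp add: norm_axis_1)
    finally show ?thesis .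
  qed
  have "norm A \<le> (\<Sum>i\<in>UNIV. norm (A$i))"
    by (simp add: norm_vec_def L2_set_le_sum)
  also have "\<dots> \<le> (\<Sum>i\<in>(UNIV::'m set). real CARD('n) * c)"
  proof (rule sum_mono)
    fix i
    have "norm (A$i) \<le> (\<Sum>j\<in>UNIV. \<bar>A$i$j\<bar>)" by (rule norm_le_l1_cart)
    also have "\<dots> \<le> (\<Sum>j\<in>(UNIV::'n set). c)" by (rule sum_mono) (rule ij)
    finally show "norm (A$i) \<le> real CARD('n) * c" by simp
  qed
  finally show ?thesis by simp
qed

lemma minv_bound:
  fixes P Q :: "real^'n^'n"
  assumes "invertible P" "invertible Q" "norm (matrix_inv P) * norm (Q - P) \<le> 1/2"
  shows "norm (matrix_inv Q) \<le> real CARD('n) * real CARD('n) * (2 * norm (matrix_inv P))"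
proof (rule norm_mat_le_cols)
  fix v :: "real^'n"
  define w where "w = matrix_inv Q *v v"
  have Qw: "Q *v w = v" using assms(2) by (simp add: w_def minv_vec)
  have "matrix_inv P *v v = matrix_inv P *v (P *v w) + matrix_inv P *v ((Q - P) *v w)"
    by (simp add: Qw[symmetric] matrix_vector_mult_diff_rdistrib matrix_vector_mult_diff_distrib)
  also have "\<dots> = w + matrix_inv P *v ((Q - P) *v w)" using assms(1) by (simp add: minv_vec)
  finally have eq: "w = matrix_inv P *v v - matrix_inv P *v ((Q - P) *v w)" by simp
  have "norm (matrix_inv P *v ((Q - P) *v w)) \<le> norm (matrix_inv P) * (norm (Q - P) * norm w)"
    by (meson norm_mv order_trans mult_left_mono norm_ge_zero)
  also have "\<dots> = (norm (matrix_inv P) * norm (Q - P)) * norm w" by (simp add: mult.assoc)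
  also have "\<dots> \<le> 1/2 * norm w" by (rule mult_right_mono[OF assms(3)]) simp
  finally have "norm w \<le> norm (matrix_inv P) * norm v + 1/2 * norm w"
    using eq[THEN arg_cong[where f=norm]] norm_mv[of "matrix_inv P" v] norm_triangle_ineq4[of "matrix_inv P *v v" "matrix_inv P *v ((Q - P) *v w)"]
    by linarith
  then show "norm (matrix_inv Q *v v) \<le> 2 * norm (matrix_inv P) * norm v" by (simp add: w_def)
qed

lemma minv_diff:
  fixes P Q :: "real^'n^'n"
  assumes "invertible P" "invertible Q"
  shows "matrix_inv Q - matrix_inv P = - (matrix_inv Q ** (Q - P) ** matrix_inv P)"
proof -
  have "matrix_inv Q ** (Q - P) ** matrix_inv P = matrix_inv Q ** Q ** matrix_inv P - matrix_inv Q ** (P ** matrix_inv P)"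
    by (simp add: mm_diff_ldistrib mm_diff_rdistrib matrix_mul_assoc)
  also have "\<dots> = matrix_inv P - matrix_inv Q" using assms by (simp add: minv)
  finally show ?thesis by simp
qed

lemma has_vd_minv:
  fixes F :: "real \<Rightarrow> real^'n^'n"
  assumes der: "(F has_vector_derivative F') (at t within S)"
    and inv: "\<And>s. s \<in> S \<Longrightarrow> invertible (F s)" and tS: "t \<in> S"
  shows "((\<lambda>s. matrix_inv (F s)) has_vector_derivative (- (matrix_inv (F t) ** F' ** matrix_inv (F t)))) (at t within S)"
proof -
  define G where "G s = matrix_inv (F s)" for s
  define g where "g = norm (G t)"
  define B where "B = real CARD('n) * real CARD('n) * (2 * g)"
  define c where "c = norm F'"
  have g0: "g \<ge> 0" and B0: "B \<ge> 0" and c0: "c \<ge> 0" by (auto simp: g_def B_def c_def)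
  have dF: "\<forall>e>0. \<exists>d>0. \<forall>y\<in>S. norm (y - t) < d \<longrightarrow> norm (F y - F t - (y - t) *\<^sub>R F') \<le> e * norm (y - t)"
    using der unfolding has_vector_derivative_def has_derivative_within_alt by blast
  have key: "norm (G y - G t - (y - t) *\<^sub>R (- (G t ** F' ** G t)))
     \<le> norm (G y) * norm (F y - F t - (y - t) *\<^sub>R F') * g + \<bar>y - t\<bar> * (norm (G y - G t) * c * g)"
    if "y \<in> S" for y
  proof -
    have iy: "invertible (F y)" and it: "invertible (F t)" using inv that tS by auto
    have eq: "G y - G t - (y - t) *\<^sub>R (- (G t ** F' ** G t)) =
       - (G y ** (F y - F t - (y - t) *\<^sub>R F') ** G t) - (y - t) *\<^sub>R ((G y - G t) ** F' ** G t)"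
    proof -
      have hyp: "G y - G t = - (G y ** (F y - F t) ** G t)"
        unfolding G_def by (rule minv_diff[OF it iy])
      have e1: "G y ** (F y - F t - (y - t) *\<^sub>R F') ** G t = G y ** (F y - F t) ** G t - (y-t) *\<^sub>R (G y ** F' ** G t)"
        by (simp add: mm_diff_ldistrib mm_diff_rdistrib mm_scale_l mm_scale_r)
      have e2: "(G y - G t) ** F' ** G t = G y ** F' ** G t - G t ** F' ** G t"
        by (simp add: mm_diff_rdistrib)
      have "G y - G t - (y - t) *\<^sub>R (- (G t ** F' ** G t)) = - (G y ** (F y - F t) ** G t) + (y - t) *\<^sub>R (G t ** F' ** G t)"
        using hyp by simp
      then show ?thesis unfolding e1 e2 by (simp add: algebra_simps)
    qed
    have n1: "norm (G y ** (F y - F t - (y - t) *\<^sub>R F') ** G t) \<le> norm (G y) * norm (F y - F t - (y - t) *\<^sub>R F') * g"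
      unfolding g_def by (meson norm_mm order_trans mult_right_mono norm_ge_zero)
    have n2: "norm ((G y - G t) ** F' ** G t) \<le> norm (G y - G t) * c * g"
      unfolding g_def c_def by (meson norm_mm order_trans mult_right_mono norm_ge_zero)
    show ?thesis unfolding eq
      using norm_triangle_ineq4[of "- (G y ** (F y - F t - (y - t) *\<^sub>R F') ** G t)" "(y - t) *\<^sub>R ((G y - G t) ** F' ** G t)"]
        n1 n2 mult_left_mono[OF n2, of "\<bar>y - t\<bar>"]
      by simp
  qed
  have "\<forall>e>0. \<exists>d>0. \<forall>y\<in>S. norm (y - t) < d \<longrightarrow>
      norm (G y - G t - (y - t) *\<^sub>R (- (G t ** F' ** G t))) \<le> e * norm (y - t)"
  proof (intro allI impI)
    fix e :: real assume e: "e > 0"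
    obtain d0 where d0: "d0 > 0" "\<forall>y\<in>S. norm (y - t) < d0 \<longrightarrow> norm (F y - F t - (y - t) *\<^sub>R F') \<le> 1 * norm (y - t)"
      using dF by (meson zero_less_one)
    define e1 where "e1 = e / (2 * (B * g + 1))"
    have e1: "e1 > 0" unfolding e1_def using e mult_nonneg_nonneg[OF B0 g0] by (intro divide_pos_pos) auto
    obtain d1 where d1: "d1 > 0" "\<forall>y\<in>S. norm (y - t) < d1 \<longrightarrow> norm (F y - F t - (y - t) *\<^sub>R F') \<le> e1 * norm (y - t)"
      using dF e1 by blast
    define d2 where "d2 = 1 / (2 * (g + 1) * (c + 1))"
    define d3 where "d3 = e / (2 * (B * g * (c + 1) * c * g + 1))"
    have d2: "d2 > 0" using g0 c0 by (auto simp: d2_def)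
    have "B * g * (c + 1) * c * g \<ge> 0" using g0 c0 B0 by simp
    then have d3: "d3 > 0" unfolding d3_def using e by (intro divide_pos_pos) auto
    show "\<exists>d>0. \<forall>y\<in>S. norm (y - t) < d \<longrightarrow>
      norm (G y - G t - (y - t) *\<^sub>R (- (G t ** F' ** G t))) \<le> e * norm (y - t)"
    proof (intro exI[of _ "min (min d0 d1) (min d2 d3)"] conjI ballI impI)
      show "min (min d0 d1) (min d2 d3) > 0" using d0 d1 d2 d3 by simp
      fix y assume yS: "y \<in> S" and yd: "norm (y - t) < min (min d0 d1) (min d2 d3)"
      define r where "r = \<bar>y - t\<bar>"
      have r0: "r \<ge> 0" by (simp add: r_def)
      have rF: "norm (F y - F t) \<le> (c + 1) * r"
      proof -
        have "norm (F y - F t) \<le> norm (F y - F t - (y - t) *\<^sub>R F') + norm ((y - t) *\<^sub>R F')"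
          by (metis diff_add_cancel norm_triangle_ineq)
        also have "\<dots> \<le> r + r * c" using d0 yS yd by (auto simp: r_def c_def)
        finally show ?thesis by (simp add: algebra_simps)
      qed
      have "(c + 1) * r \<le> (c + 1) * d2" using yd c0 by (intro mult_left_mono) (auto simp: r_def)
      then have "g * norm (F y - F t) \<le> g * ((c + 1) * d2)" using rF g0
        by (meson mult_left_mono order_trans)
      also have "\<dots> \<le> 1/2"
      proof -
        have eq: "(c + 1) * d2 = 1 / (2 * (g + 1))"
          unfolding d2_def using g0 c0 by simp
        have "g * (1 / (2 * (g + 1))) \<le> 1/2" using g0 by (simp add: field_simps)
        then show ?thesis by (simp only: eq)
      qed
      finally have small: "norm (G t) * norm (F y - F t) \<le> 1/2" by (simp add: g_def)
      have GyB: "norm (G y) \<le> B"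
        unfolding B_def g_def G_def
        by (rule minv_bound) (use inv yS tS small G_def in auto)
      have GyGt: "norm (G y - G t) \<le> B * ((c + 1) * r) * g"
      proof -
        have eq: "G y - G t = - (G y ** (F y - F t) ** G t)"
          unfolding G_def using inv yS tS by (intro minv_diff) auto
        have "norm (G y - G t) = norm (G y ** (F y - F t) ** G t)" by (simp only: eq norm_minus_cancel)
        also have "\<dots> \<le> norm (G y ** (F y - F t)) * norm (G t)" by (rule norm_mm)
        also have "\<dots> \<le> norm (G y) * norm (F y - F t) * g"
          unfolding g_def by (rule mult_right_mono[OF norm_mm norm_ge_zero])
        also have "\<dots> \<le> B * ((c + 1) * r) * g"
          using GyB rF g0 B0 by (intro mult_right_mono mult_mono) auto
        finally show ?thesis .
      qed
      have t1: "norm (G y) * norm (F y - F t - (y - t) *\<^sub>R F') * g \<le> B * (e1 * r) * g"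
        using GyB d1 yS yd g0 B0 by (intro mult_right_mono mult_mono) (auto simp: r_def)
      have "B * (e1 * r) * g = (B * g * e1) * r" by simp
      also have "\<dots> \<le> (e / 2) * r"
      proof (rule mult_right_mono[OF _ r0])
        have "B * g * e1 = e * (B * g) / (2 * (B * g + 1))" by (simp add: e1_def)
        also have "\<dots> \<le> e * (B * g + 1) / (2 * (B * g + 1))"
          using e by (intro divide_right_mono mult_left_mono) (auto simp: B0 g0)
        also have "\<dots> = e / 2" using mult_nonneg_nonneg[OF B0 g0] by (intro nonzero_mult_divide_mult_cancel_right) simp
        finally show "B * g * e1 \<le> e / 2" .
      qed
      finally have t1': "norm (G y) * norm (F y - F t - (y - t) *\<^sub>R F') * g \<le> (e/2) * r"
        using t1 by linarith
      have "r * (norm (G y - G t) * c * g) \<le> r * (B * ((c + 1) * r) * g * c * g)"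
        using GyGt r0 c0 g0 by (intro mult_left_mono mult_right_mono) auto
      also have "\<dots> = (B * g * (c + 1) * c * g * r) * r" by (simp add: algebra_simps)
      also have "\<dots> \<le> (e / 2) * r"
      proof (rule mult_right_mono[OF _ r0])
        have "B * g * (c + 1) * c * g * r \<le> B * g * (c + 1) * c * g * d3"
          using yd B0 g0 c0 by (intro mult_left_mono) (auto simp: r_def)
        also have "\<dots> = e * (B * g * (c + 1) * c * g) / (2 * (B * g * (c + 1) * c * g + 1))"
          by (simp add: d3_def)
        also have "\<dots> \<le> e * (B * g * (c + 1) * c * g + 1) / (2 * (B * g * (c + 1) * c * g + 1))"
          using e B0 g0 c0 by (intro divide_right_mono mult_left_mono) auto
        also have "\<dots> = e / 2" using \<open>B * g * (c + 1) * c * g \<ge> 0\<close> by (intro nonzero_mult_divide_mult_cancel_right) simp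
        finally show "B * g * (c + 1) * c * g * r \<le> e / 2" .
      qed
      finally have t2: "r * (norm (G y - G t) * c * g) \<le> (e / 2) * r" .
      show "norm (G y - G t - (y - t) *\<^sub>R (- (G t ** F' ** G t))) \<le> e * norm (y - t)"
        using key[OF yS] t1' t2 by (simp add: r_def)
    qed
  qed
  moreover have "bounded_linear (\<lambda>x. x *\<^sub>R (- (G t ** F' ** G t)))"
    by (rule bounded_linear_scaleR_left)
  ultimately show ?thesis
    unfolding has_vector_derivative_def has_derivative_within_alt G_def by blast
qed

lemma mm_vd:
  fixes f :: "real \<Rightarrow> real^'n^'m" and g :: "real \<Rightarrow> real^'k^'n"
  assumes "(f has_vector_derivative f') (at x within s)" "(g has_vector_derivative g') (at x within s)"
  shows "((\<lambda>x. f x ** g x) has_vector_derivative (f x ** g' + f' ** g x)) (at x within s)"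
  using bounded_bilinear.has_vector_derivative[OF bb_mm assms] by simp

lemma mv_vd:
  fixes f :: "real \<Rightarrow> real^'n^'m" and g :: "real \<Rightarrow> real^'n"
  assumes "(f has_vector_derivative f') (at x within s)" "(g has_vector_derivative g') (at x within s)"
  shows "((\<lambda>x. f x *v g x) has_vector_derivative (f x *v g' + f' *v g x)) (at x within s)"
  using bounded_bilinear.has_vector_derivative[OF bb_mv assms] by simp

lemma mm_cont:
  fixes f :: "real \<Rightarrow> real^'n^'m" and g :: "real \<Rightarrow> real^'k^'n"
  assumes "continuous_on S f" "continuous_on S g"
  shows "continuous_on S (\<lambda>x. f x ** g x)"
  using bounded_bilinear.continuous_on[OF bb_mm assms] by simp

lemma transpose_cont:
  fixes f :: "real \<Rightarrow> real^'n^'m"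
  assumes "continuous_on S f"
  shows "continuous_on S (\<lambda>x. transpose (f x))"
  using bounded_linear.continuous_on[OF bl_transpose assms] by simp

lemma fm_cont: "fundamental_matrix A X \<Longrightarrow> continuous_on {0..} X"
  unfolding fundamental_matrix_def continuous_on_eq_continuous_within
  by (auto intro: has_vector_derivative_continuous)

lemma fm_inv: "fundamental_matrix A X \<Longrightarrow> t \<ge> 0 \<Longrightarrow> invertible (X t)"
  unfolding fundamental_matrix_def by auto

lemma fm_der: "fundamental_matrix A X \<Longrightarrow> t \<ge> 0 \<Longrightarrow> (X has_vector_derivative (A t ** X t)) (at t within {0..})"
  unfolding fundamental_matrix_def by auto

lemma fm_inv_der:
  assumes "fundamental_matrix A X" "t \<ge> 0"
  shows "((\<lambda>s. matrix_inv (X s)) has_vector_derivative (- (matrix_inv (X t) ** A t))) (at t within {0..})"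
proof -
  have "((\<lambda>s. matrix_inv (X s)) has_vector_derivative (- (matrix_inv (X t) ** (A t ** X t) ** matrix_inv (X t)))) (at t within {0..})"
    by (rule has_vd_minv[OF fm_der[OF assms]]) (use fm_inv[OF assms(1)] assms(2) in auto)
  moreover have "matrix_inv (X t) ** (A t ** X t) ** matrix_inv (X t) = matrix_inv (X t) ** A t"
    using minv(1)[OF fm_inv[OF assms]] by (simp add: matrix_mul_assoc[symmetric])
  ultimately show ?thesis by simp
qed

lemma fm_inv_cont: "fundamental_matrix A X \<Longrightarrow> continuous_on {0..} (\<lambda>s. matrix_inv (X s))"
  unfolding continuous_on_eq_continuous_within
  by (auto intro: has_vector_derivative_continuous fm_inv_der)

lemma fm_unique:
  assumes X: "fundamental_matrix A X" and Z: "fundamental_matrix A Z" and "t \<ge> 0" "s \<ge> 0"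
  shows "trans_mat Z t s = trans_mat X t s"
proof -
  define W where "W r = matrix_inv (X r) ** Z r" for r
  have derW: "(W has_vector_derivative 0) (at r within {0..})" if "r \<in> {0..}" for r
  proof -
    have "(W has_vector_derivative (matrix_inv (X r) ** (A r ** Z r) + (- (matrix_inv (X r) ** A r)) ** Z r)) (at r within {0..})"
      unfolding W_def using that by (intro mm_vd fm_inv_der[OF X] fm_der[OF Z]) auto
    moreover have "matrix_inv (X r) ** (A r ** Z r) + (- (matrix_inv (X r) ** A r)) ** Z r = 0"
      by (simp add: matrix_mul_assoc mm_diff_rdistrib[of 0, simplified])
    ultimately show ?thesis by simp
  qed
  have "convex {0::real..}" by (simp add: convex_real_interval)
  then obtain W0 where W0: "\<And>r. r \<in> {0..} \<Longrightarrow> W r = W0"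
    using has_vector_derivative_zero_constant derW by blast
  have ZX: "Z r = X r ** W0" if "r \<ge> 0" for r
  proof -
    have "X r ** W r = Z r" unfolding W_def using minv(1)[OF fm_inv[OF X that]]
      by (simp add: matrix_mul_assoc)
    then show ?thesis using W0 that by auto
  qed
  have iW: "invertible W0" using W0[of 0] invertible_mult[OF invertible_minv[OF fm_inv[OF X]] fm_inv[OF Z]]
    by (auto simp: W_def)
  have "trans_mat Z t s = X t ** W0 ** (matrix_inv W0 ** matrix_inv (X s))"
    unfolding trans_mat_def ZX[OF assms(3)] ZX[OF assms(4)]
    using minv_mult[OF fm_inv[OF X assms(4)] iW] by simp
  also have "\<dots> = X t ** (W0 ** matrix_inv W0) ** matrix_inv (X s)" by (simp add: matrix_mul_assoc)
  also have "\<dots> = trans_mat X t s" using minv(1)[OF iW] by (simp add: trans_mat_def)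
  finally show ?thesis .
qed

lemma trans_mat_comp:
  assumes "fundamental_matrix A X" "s \<ge> 0"
  shows "trans_mat X t s ** trans_mat X s r = trans_mat X t r"
proof -
  have "trans_mat X t s ** trans_mat X s r = X t ** (matrix_inv (X s) ** X s) ** matrix_inv (X r)"
    unfolding trans_mat_def by (simp add: matrix_mul_assoc)
  then show ?thesis using minv(2)[OF fm_inv[OF assms]] by (simp add: trans_mat_def)
qed

lemma trans_mat_self: "fundamental_matrix A X \<Longrightarrow> s \<ge> 0 \<Longrightarrow> trans_mat X s s = mat 1"
  unfolding trans_mat_def using minv(1)[OF fm_inv] by blast

lemma trans_mat_vd:
  assumes "fundamental_matrix A X" "t \<ge> 0"
  shows "((\<lambda>s. trans_mat X s t0 *v v) has_vector_derivative (A t *v (trans_mat X t t0 *v v))) (at t within {0..})"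
proof -
  have "((\<lambda>s. X s *v (matrix_inv (X t0) *v v)) has_vector_derivative (X t *v 0 + (A t ** X t) *v (matrix_inv (X t0) *v v))) (at t within {0..})"
    by (intro mv_vd fm_der[OF assms] has_vector_derivative_const)
  then show ?thesis by (simp add: trans_mat_def matrix_vector_mul_assoc matrix_mul_assoc)
qed

lemma growth:
  assumes X: "fundamental_matrix A X" and k: "\<And>t. t \<ge> 0 \<Longrightarrow> norm (A t) \<le> k"
    and t0: "0 \<le> t0" "t0 \<le> t"
  shows "norm (trans_mat X t t0 *v v) \<le> exp (k * (t - t0)) * norm v"
proof -
  define x where "x s = trans_mat X s t0 *v v" for s
  define f where "f s = exp (- (2 * k) * (s - t0)) * (x s \<bullet> x s)" for s
  define f' where "f' s = exp (- (2 * k) * (s - t0)) * (- (2 * k)) * (x s \<bullet> x s)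
     + exp (- (2 * k) * (s - t0)) * (x s \<bullet> (A s *v x s) + (A s *v x s) \<bullet> x s)" for s
  have derf: "(f has_derivative (\<lambda>h. h * f' s)) (at s within {t0..t})" if "s \<in> {t0..t}" for s
  proof -
    have s0: "s \<ge> 0" using that t0 by auto
    have dx: "(x has_vector_derivative (A s *v x s)) (at s within {t0..t})"
      unfolding x_def
      by (rule has_vector_derivative_within_subset[OF trans_mat_vd[OF X s0]]) (use t0 in auto)
    have dxx: "((\<lambda>s. x s \<bullet> x s) has_vector_derivative (x s \<bullet> (A s *v x s) + (A s *v x s) \<bullet> x s)) (at s within {t0..t})"
      using bounded_bilinear.has_vector_derivative[OF bounded_bilinear_inner dx dx] by simp
    have de: "((\<lambda>s. exp (- (2 * k) * (s - t0))) has_real_derivative exp (- (2 * k) * (s - t0)) * (- (2 * k))) (at s within {t0..t})"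
      by (auto intro!: derivative_eq_intros)
    have "(f has_real_derivative f' s) (at s within {t0..t})"
      unfolding f_def f'_def
      using DERIV_mult[OF de dxx[unfolded has_real_derivative_iff_has_vector_derivative[symmetric]]]
      by (simp add: algebra_simps)
    moreover have "(\<lambda>h. h * f' s) = (*) (f' s)" by (auto simp: fun_eq_iff mult.commute)
    ultimately show ?thesis by (simp add: has_field_derivative_def)
  qed
  obtain \<xi> where "\<xi> \<in> {t0..t}" and xi: "f t - f t0 = (t - t0) * f' \<xi>"
    using mvt_very_simple[OF t0(2), of f "\<lambda>s h. h * f' s"] derf by auto
  have "f' \<xi> \<le> 0"
  proof -
    have "\<xi> \<ge> 0" using \<open>\<xi> \<in> {t0..t}\<close> t0 by auto
    then have nA: "norm (A \<xi>) \<le> k" by (rule k)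
    have "x \<xi> \<bullet> (A \<xi> *v x \<xi>) \<le> norm (x \<xi>) * (norm (A \<xi>) * norm (x \<xi>))"
      by (meson Cauchy_Schwarz_ineq2 abs_le_iff mult_left_mono norm_ge_zero norm_mv order_trans)
    also have "\<dots> \<le> norm (x \<xi>) * (k * norm (x \<xi>))"
      by (intro mult_left_mono mult_right_mono nA) auto
    finally have "x \<xi> \<bullet> (A \<xi> *v x \<xi>) + (A \<xi> *v x \<xi>) \<bullet> x \<xi> \<le> 2 * k * (x \<xi> \<bullet> x \<xi>)"
      by (simp add: inner_commute power2_norm_eq_inner[symmetric] power2_eq_square algebra_simps)
    then have "(- (2 * k)) * (x \<xi> \<bullet> x \<xi>) + (x \<xi> \<bullet> (A \<xi> *v x \<xi>) + (A \<xi> *v x \<xi>) \<bullet> x \<xi>) \<le> 0"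
      by simp
    then have "exp (- (2 * k) * (\<xi> - t0)) * ((- (2 * k)) * (x \<xi> \<bullet> x \<xi>) + (x \<xi> \<bullet> (A \<xi> *v x \<xi>) + (A \<xi> *v x \<xi>) \<bullet> x \<xi>)) \<le> 0"
      by (simp add: mult_nonneg_nonpos)
    then show ?thesis by (simp add: f'_def algebra_simps)
  qed
  then have "(t - t0) * f' \<xi> \<le> 0" using t0 by (simp add: mult_nonneg_nonpos)
  then have "f t \<le> f t0" using xi by linarith
  moreover have "f t0 = (norm v)^2"
    using trans_mat_self[OF X t0(1)] by (simp add: f_def x_def power2_norm_eq_inner)
  ultimately have "exp (- (2 * k) * (t - t0)) * (norm (x t))^2 \<le> (norm v)^2"
    by (simp add: f_def power2_norm_eq_inner)
  then have h: "(exp (- (2 * k) * (t - t0)) * (norm (x t))^2) * exp ((2 * k) * (t - t0)) \<le> (norm v)^2 * exp ((2 * k) * (t - t0))"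
    by (rule mult_right_mono) simp
  have E: "exp (- (2 * k) * (t - t0)) * exp ((2 * k) * (t - t0)) = 1" by (simp add: exp_add[symmetric])
  have "(norm (x t))^2 = (exp (- (2 * k) * (t - t0)) * (norm (x t))^2) * exp ((2 * k) * (t - t0))"
    using E by (simp add: algebra_simps)
  then have "(norm (x t))^2 \<le> (norm v)^2 * exp ((2 * k) * (t - t0))"
    using h by linarith
  also have "exp ((2 * k) * (t - t0)) = (exp (k * (t - t0)))^2"
    by (simp add: power2_eq_square exp_add[symmetric] algebra_simps)
  also have "(norm v)^2 * (exp (k * (t - t0)))^2 = (exp (k * (t - t0)) * norm v)^2"
    by (simp add: power_mult_distrib)
  finally show ?thesis unfolding x_def
    by (rule power2_le_imp_le) simp
qed

lemma mv_cont:
  fixes f :: "real \<Rightarrow> real^'n^'m" and g :: "real \<Rightarrow> real^'n"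
  assumes "continuous_on S f" "continuous_on S g"
  shows "continuous_on S (\<lambda>x. f x *v g x)"
  using bounded_bilinear.continuous_on[OF bb_mv assms] by simp

lemma mv_uminus: "(- (M::real^'n^'m)) *v x = - (M *v x)"
  by (simp add: matrix_vector_mult_def vec_eq_iff sum_negf)

lemma inner_transpose: "(v::real^'n) \<bullet> (transpose (P::real^'n^'m) *v w) = (P *v v) \<bullet> w"
proof -
  have "v \<bullet> (transpose P *v w) = (w v* P) \<bullet> v" by (simp add: inner_commute)
  also have "\<dots> = w \<bullet> (P *v v)" by (rule dot_lmul_matrix)
  finally show ?thesis by (simp add: inner_commute)
qed

lemma trans_mat_cont:
  assumes "fundamental_matrix A X"
  shows "continuous_on {0..} (\<lambda>s. trans_mat X s t0)"
  unfolding trans_mat_def by (intro mm_cont fm_cont[OF assms] continuous_on_const)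

lemma quad_cont:
  assumes X: "fundamental_matrix A X" and C: "continuous_on {0..} C" and "0 \<le> a"
  shows "continuous_on {a..b} (\<lambda>s. (norm (C s *v (trans_mat X s t0 *v v)))^2)"
proof -
  have "continuous_on {0..} (\<lambda>s. (norm (C s *v (trans_mat X s t0 *v v)))^2)"
    by (intro continuous_intros mv_cont C trans_mat_cont[OF X])
  then show ?thesis by (rule continuous_on_subset) (use assms in auto)
qed

lemma gram_quad:
  fixes X :: "real \<Rightarrow> real^'n^'n" and C :: "real \<Rightarrow> real^'n^'p"
  assumes X: "fundamental_matrix A X" and C: "continuous_on {0..} C" and t0: "0 \<le> t0"
  shows "v \<bullet> (obs_gramian X C t1 t0 *v v) = integral {t0..t1} (\<lambda>s. (norm (C s *v (trans_mat X s t0 *v v)))^2)"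
proof -
  define M where "M s = transpose (trans_mat X s t0) ** transpose (C s) ** C s ** trans_mat X s t0" for s
  have "continuous_on {0..} M"
    unfolding M_def
    by (intro mm_cont transpose_cont trans_mat_cont[OF X] C)
  then have "continuous_on {t0..t1} M" by (rule continuous_on_subset) (use t0 in auto)
  then have int: "M integrable_on {t0..t1}" by (rule integrable_continuous_interval)
  have bl: "bounded_linear (\<lambda>N::real^'n^'n. v \<bullet> (N *v v))"
    by (intro bounded_linear_compose[OF bounded_linear_inner_right] bounded_bilinear.bounded_linear_left[OF bb_mv])
  have "v \<bullet> (obs_gramian X C t1 t0 *v v) = integral {t0..t1} ((\<lambda>N. v \<bullet> (N *v v)) \<circ> M)"
    unfolding obs_gramian_def M_def[symmetric] by (rule integral_linear[OF int bl, symmetric])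
  also have "\<dots> = integral {t0..t1} (\<lambda>s. (norm (C s *v (trans_mat X s t0 *v v)))^2)"
  proof (rule integral_cong)
    fix s
    show "((\<lambda>N. v \<bullet> (N *v v)) \<circ> M) s = (norm (C s *v (trans_mat X s t0 *v v)))^2"
      unfolding M_def o_def
      by (simp add: matrix_vector_mul_assoc[symmetric] inner_transpose power2_norm_eq_inner
          del: transpose_matrix_vector)
  qed
  finally show ?thesis .
qed

lemma norm_cont:
  assumes X: "fundamental_matrix A X" and C: "continuous_on {0..} C" and "0 \<le> a"
  shows "continuous_on {a..b} (\<lambda>s. norm (C s *v (trans_mat X s t0 *v v)))"
proof -
  have "continuous_on {0..} (\<lambda>s. norm (C s *v (trans_mat X s t0 *v v)))"
    by (intro continuous_intros mv_cont C trans_mat_cont[OF X])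
  then show ?thesis by (rule continuous_on_subset) (use assms in auto)
qed

lemma voc:
  fixes A :: "real \<Rightarrow> real^'n^'n" and C :: "real \<Rightarrow> real^'n^'p" and L :: "real \<Rightarrow> real^'p^'n"
  assumes X: "fundamental_matrix A X" and Y: "fundamental_matrix (\<lambda>t. A t - L t ** C t) Y"
    and t0: "0 \<le> t0" "t0 \<le> t"
  shows "((\<lambda>s. trans_mat Y t s *v (L s *v (C s *v (trans_mat X s t0 *v v)))) has_integral
           (trans_mat X t t0 *v v - trans_mat Y t t0 *v v)) {t0..t}"
proof -
  define x where "x s = trans_mat X s t0 *v v" for s
  define g where "g s = Y t *v (matrix_inv (Y s) *v x s)" for s
  have dg: "(g has_vector_derivative (trans_mat Y t s *v (L s *v (C s *v x s)))) (at s within {t0..t})"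
    if s: "s \<in> {t0..t}" for s
  proof -
    have s0: "s \<ge> 0" using s t0 by auto
    have d2: "((\<lambda>s. matrix_inv (Y s) *v x s) has_vector_derivative
        (matrix_inv (Y s) *v (A s *v x s) + (- (matrix_inv (Y s) ** (A s - L s ** C s))) *v x s)) (at s within {0..})"
      unfolding x_def by (intro mv_vd fm_inv_der[OF Y s0] trans_mat_vd[OF X s0])
    have d3: "(g has_vector_derivative (Y t *v (matrix_inv (Y s) *v (A s *v x s) + (- (matrix_inv (Y s) ** (A s - L s ** C s))) *v x s) + 0 *v (matrix_inv (Y s) *v x s))) (at s within {0..})"
      unfolding g_def by (intro mv_vd d2 has_vector_derivative_const)
    have "(matrix_inv (Y s) ** (A s - L s ** C s)) *v x s = matrix_inv (Y s) *v (A s *v x s) - matrix_inv (Y s) *v (L s *v (C s *v x s))"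
      by (simp add: mm_diff_ldistrib matrix_vector_mult_diff_rdistrib matrix_vector_mul_assoc)
    then have "Y t *v (matrix_inv (Y s) *v (A s *v x s) + (- (matrix_inv (Y s) ** (A s - L s ** C s))) *v x s) + 0 *v (matrix_inv (Y s) *v x s)
       = trans_mat Y t s *v (L s *v (C s *v x s))"
      by (simp add: mv_uminus trans_mat_def matrix_vector_mul_assoc matrix_mul_assoc)
    with d3 have "(g has_vector_derivative (trans_mat Y t s *v (L s *v (C s *v x s)))) (at s within {0..})"
      by simp
    then show ?thesis by (rule has_vector_derivative_within_subset) (use t0 in auto)
  qed
  have "((\<lambda>s. trans_mat Y t s *v (L s *v (C s *v x s))) has_integral (g t - g t0)) {t0..t}"
    by (rule fundamental_theorem_of_calculus[OF t0(2) dg])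
  moreover have "g t = x t" unfolding g_def using fm_inv[OF Y] t0 by (simp add: minv_vec)
  moreover have "g t0 = trans_mat Y t t0 *v v"
    unfolding g_def x_def using trans_mat_self[OF X t0(1)] by (simp add: trans_mat_def matrix_vector_mul_assoc)
  ultimately show ?thesis by (simp add: x_def)
qed

lemma amgm: "(p::real) > 0 \<Longrightarrow> a \<le> p + a^2 / (4 * p)"
proof -
  assume p: "p > 0"
  have "0 \<le> (a - 2 * p)^2" by simp
  then have "4 * p * a \<le> 4 * p * p + a^2" by (simp add: power2_eq_square algebra_simps)
  then show ?thesis using p by (simp add: field_simps)
qed

lemma int_cmul_real: "(f::real \<Rightarrow> real) integrable_on S \<Longrightarrow> (\<lambda>x. c * f x) integrable_on S"
  using integrable_cmul[of f S c] by simp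

lemma det_imp_uco:
  fixes A :: "real \<Rightarrow> real^'n^'n" and C :: "real \<Rightarrow> real^'n^'p" and L :: "real \<Rightarrow> real^'p^'n"
  assumes X: "fundamental_matrix A X"
    and bk: "\<And>t0 t. 0 \<le> t \<Longrightarrow> t \<le> t0 \<Longrightarrow> norm (trans_mat X t t0) \<le> K * exp (\<alpha> * (t - t0))"
    and K: "K \<ge> 1" and \<alpha>: "\<alpha> > 0"
    and kA: "\<And>t. t \<ge> 0 \<Longrightarrow> norm (A t) \<le> k"
    and C: "continuous_on {0..} C" and cC: "\<And>t. t \<ge> 0 \<Longrightarrow> norm (C t) \<le> c"
    and lL: "\<And>t. t \<ge> 0 \<Longrightarrow> norm (L t) \<le> l" and l: "l > 0"
    and Y: "fundamental_matrix (\<lambda>t. A t - L t ** C t) Y"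
    and YK: "\<And>t0 t. 0 \<le> t0 \<Longrightarrow> t0 \<le> t \<Longrightarrow> norm (trans_mat Y t t0) \<le> K1" and K1: "K1 \<ge> 1"
  shows "unif_complete_obs A C"
proof -
  have c0: "c \<ge> 0" using cC[of 0] norm_ge_zero[of "C 0"] by linarith
  have k0: "k \<ge> 0" using kA[of 0] norm_ge_zero[of "A 0"] by linarith
  define \<sigma> where "\<sigma> = ln (K * (K1 + 2)) / \<alpha>"
  have "K * (K1 + 2) \<ge> 1 * 3" using K K1 by (intro mult_mono) auto
  then have KK: "K * (K1 + 2) > 1" by simp
  have \<sigma>: "\<sigma> > 0" using \<alpha> KK by (simp add: \<sigma>_def ln_gt_zero)
  have e\<sigma>: "exp (\<alpha> * \<sigma>) = K * (K1 + 2)" using \<alpha> KK by (simp add: \<sigma>_def)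
  define \<beta>1 where "\<beta>1 = 4 / ((K1 * l)^2 * \<sigma>)"
  define \<beta>2 where "\<beta>2 = \<sigma> * ((c + 1) * exp (k * \<sigma>))^2"
  have \<beta>1: "\<beta>1 > 0" using K1 l \<sigma> by (simp add: \<beta>1_def)
  have \<beta>2: "\<beta>2 > 0" using c0 \<sigma> by (simp add: \<beta>2_def)
  show ?thesis unfolding unif_complete_obs_def
  proof (rule exI[of _ X], rule conjI[OF X], rule exI[of _ \<beta>1], rule conjI[OF \<beta>1],
      rule exI[of _ \<beta>2], rule conjI[OF \<beta>2], rule exI[of _ \<sigma>], rule conjI[OF \<sigma>], intro allI impI conjI)
    fix t0 :: real and v :: "real^'n" assume t0: "t0 \<ge> 0"
    define x where "x s = trans_mat X s t0 *v v" for s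
    define t where "t = t0 + \<sigma>"
    have tt0: "t0 \<le> t" using \<sigma> by (simp add: t_def)
    define Q where "Q = integral {t0..t} (\<lambda>s. (norm (C s *v x s))^2)"
    have gq: "v \<bullet> (obs_gramian X C (t0 + \<sigma>) t0 *v v) = Q"
      unfolding Q_def x_def t_def by (rule gram_quad[OF X C t0])
    have qint: "(\<lambda>s. (norm (C s *v x s))^2) integrable_on {t0..t}"
      unfolding x_def by (intro integrable_continuous_interval quad_cont[OF X C t0])
    have nint: "(\<lambda>s. norm (C s *v x s)) integrable_on {t0..t}"
      unfolding x_def by (intro integrable_continuous_interval norm_cont[OF X C t0])
    have nv2: "v \<bullet> v = (norm v)^2" by (simp add: power2_norm_eq_inner)
    have "Q \<le> integral {t0..t} (\<lambda>s. ((c + 1) * exp (k * \<sigma>) * norm v)^2)"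
      unfolding Q_def
    proof (rule integral_le[OF qint])
      show "(\<lambda>s. ((c + 1) * exp (k * \<sigma>) * norm v)^2) integrable_on {t0..t}" by (rule integrable_const_ivl)
      fix s assume s: "s \<in> {t0..t}"
      have s0: "s \<ge> 0" using s t0 by auto
      have "norm (C s *v x s) \<le> norm (C s) * norm (x s)" by (rule norm_mv)
      also have "\<dots> \<le> (c + 1) * (exp (k * (s - t0)) * norm v)"
        unfolding x_def using cC[OF s0] growth[OF X kA t0, of s v] s c0
        by (intro mult_mono) auto
      also have "\<dots> \<le> (c + 1) * (exp (k * \<sigma>) * norm v)"
        using s k0 c0 by (intro mult_left_mono mult_right_mono) (auto simp: t_def intro!: mult_left_mono)
      finally show "(norm (C s *v x s))^2 \<le> ((c + 1) * exp (k * \<sigma>) * norm v)^2"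
        by (intro power_mono) (auto simp: mult.assoc)
    qed
    also have "\<dots> = \<beta>2 * (v \<bullet> v)" using tt0 by (simp add: \<beta>2_def nv2 t_def power_mult_distrib)
    finally show "v \<bullet> (obs_gramian X C (t0 + \<sigma>) t0 *v v) \<le> \<beta>2 * (v \<bullet> v)" using gq by simp
    show "\<beta>1 * (v \<bullet> v) \<le> v \<bullet> (obs_gramian X C (t0 + \<sigma>) t0 *v v)"
    proof (cases "v = 0")
      case True then show ?thesis by simp
    next
      case False
      then have nv: "norm v > 0" by simp
      have t0': "0 \<le> t" using t0 tt0 by linarith
      \<comment> \<open>anti-stability\<close>
      have "v = trans_mat X t0 t *v x t"
        unfolding x_def using trans_mat_comp[OF X t0', of t0 t0] trans_mat_self[OF X t0]
        by (simp add: matrix_vector_mul_assoc)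
      then have "norm v \<le> norm (trans_mat X t0 t) * norm (x t)" by (metis norm_mv)
      also have "\<dots> \<le> K * exp (\<alpha> * (t0 - t)) * norm (x t)"
        by (rule mult_right_mono[OF bk[OF t0 tt0]]) simp
      finally have "norm v \<le> K * exp (- (\<alpha> * \<sigma>)) * norm (x t)" by (simp add: t_def)
      then have "exp (\<alpha> * \<sigma>) * norm v \<le> K * norm (x t)"
        by (simp add: exp_minus field_simps)
      then have "K * ((K1 + 2) * norm v) \<le> K * norm (x t)" by (simp add: e\<sigma> algebra_simps)
      then have xt_low: "(K1 + 2) * norm v \<le> norm (x t)" using K by simp
      have VoC: "((\<lambda>s. trans_mat Y t s *v (L s *v (C s *v x s))) has_integral (x t - trans_mat Y t t0 *v v)) {t0..t}"
        unfolding x_def by (rule voc[OF X Y t0 tt0])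
      have "norm (x t - trans_mat Y t t0 *v v) \<le> integral {t0..t} (\<lambda>s. K1 * l * norm (C s *v x s))"
      proof -
        have "norm (integral {t0..t} (\<lambda>s. trans_mat Y t s *v (L s *v (C s *v x s)))) \<le> integral {t0..t} (\<lambda>s. K1 * l * norm (C s *v x s))"
        proof (rule integral_norm_bound_integral)
          show "(\<lambda>s. trans_mat Y t s *v (L s *v (C s *v x s))) integrable_on {t0..t}"
            using VoC by blast
          show "(\<lambda>s. K1 * l * norm (C s *v x s)) integrable_on {t0..t}"
            using nint by (rule int_cmul_real)
          fix s assume s: "s \<in> {t0..t}"
          have "norm (trans_mat Y t s *v (L s *v (C s *v x s))) \<le> norm (trans_mat Y t s) * (norm (L s) * norm (C s *v x s))"
            by (meson norm_mv order_trans mult_left_mono norm_ge_zero)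
          also have "\<dots> \<le> K1 * (l * norm (C s *v x s))"
            using s t0 YK[of s t] lL[of s] l K1 by (intro mult_mono) auto
          finally show "norm (trans_mat Y t s *v (L s *v (C s *v x s))) \<le> K1 * l * norm (C s *v x s)"
            by (simp add: mult.assoc)
        qed
        then show ?thesis using VoC by (simp add: integral_unique)
      qed
      define p where "p = norm v / \<sigma>"
      define r where "r = (K1 * l)^2 / (4 * p)"
      have p: "p > 0" using nv \<sigma> by (simp add: p_def)
      have "integral {t0..t} (\<lambda>s. K1 * l * norm (C s *v x s)) \<le> integral {t0..t} (\<lambda>s. p + r * (norm (C s *v x s))^2)"
      proof (rule integral_le)
        show "(\<lambda>s. K1 * l * norm (C s *v x s)) integrable_on {t0..t}"
          using nint by (rule int_cmul_real)
        show "(\<lambda>s. p + r * (norm (C s *v x s))^2) integrable_on {t0..t}"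
          by (intro integrable_add integrable_const_ivl int_cmul_real qint)
        fix s
        show "K1 * l * norm (C s *v x s) \<le> p + r * (norm (C s *v x s))^2"
          using amgm[OF p, of "K1 * l * norm (C s *v x s)"] by (simp add: r_def power_mult_distrib)
      qed
      also have "\<dots> = \<sigma> * p + r * Q"
      proof -
        have "integral {t0..t} (\<lambda>s. p + r * (norm (C s *v x s))^2) = integral {t0..t} (\<lambda>s. p) + integral {t0..t} (\<lambda>s. r * (norm (C s *v x s))^2)"
          by (rule integral_add) (auto intro: int_cmul_real qint)
        also have "integral {t0..t} (\<lambda>s. p) = \<sigma> * p" using tt0 by (simp add: t_def)
        also have "integral {t0..t} (\<lambda>s. r * (norm (C s *v x s))^2) = r * Q"
          unfolding Q_def by (rule integral_mult[OF qint, symmetric])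
        finally show ?thesis .
      qed
      also have "\<sigma> * p = norm v" using \<sigma> by (simp add: p_def)
      finally have ib: "integral {t0..t} (\<lambda>s. K1 * l * norm (C s *v x s)) \<le> norm v + r * Q" .
      have "norm (x t) \<le> norm (trans_mat Y t t0 *v v) + norm (x t - trans_mat Y t t0 *v v)"
        by (metis add.commute diff_add_cancel norm_triangle_ineq)
      also have "norm (trans_mat Y t t0 *v v) \<le> K1 * norm v"
        by (meson YK[OF t0 tt0] norm_mv order_trans mult_right_mono norm_ge_zero)
      finally have "(K1 + 2) * norm v \<le> K1 * norm v + (norm v + r * Q)"
        using xt_low \<open>norm (x t - trans_mat Y t t0 *v v) \<le> _\<close> ib by linarith
      then have "norm v \<le> r * Q" by (simp add: algebra_simps)
      then have "norm v * (4 * p) \<le> (K1 * l)^2 * Q" using p by (simp add: r_def field_simps)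
      then have "4 * (norm v)^2 \<le> (K1 * l)^2 * \<sigma> * Q" using \<sigma>
        by (simp add: p_def field_simps power2_eq_square)
      then have "4 / ((K1 * l)^2 * \<sigma>) * (norm v)^2 \<le> Q" using \<sigma> K1 l
        by (simp add: field_simps)
      then show ?thesis using gq by (simp add: \<beta>1_def nv2)
    qed
  qed
qed

lemma integral_vd_ge0:
  fixes f :: "real \<Rightarrow> 'a::banach"
  assumes "continuous_on {0..} f" "t \<ge> 0"
  shows "((\<lambda>u. integral {0..u} f) has_vector_derivative f t) (at t within {0..})"
proof -
  have "continuous_on {0..t+1} f" by (rule continuous_on_subset[OF assms(1)]) auto
  then have "((\<lambda>u. integral {0..u} f) has_vector_derivative f t) (at t within {0..t+1})"
    by (rule integral_has_vector_derivative) (use assms in auto)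
  moreover have "at t within {0..t+1} = at t within {0::real..}"
    by (rule at_within_nhd[of _ "{..<t+1}"]) auto
  ultimately show ?thesis by simp
qed

locale uco_setup =
  fixes A :: "real \<Rightarrow> real^'n^'n" and C :: "real \<Rightarrow> real^'n^'p" and X :: "real \<Rightarrow> real^'n^'n"
  assumes X: "fundamental_matrix A X"
    and C: "continuous_on {0..} C"
begin

definition "D s = exp (2 * s) *\<^sub>R (transpose (X s) ** transpose (C s) ** (C s ** X s))"
definition "H t = transpose (X 0) ** X 0 + integral {0..t} D"
definition "psi u w s = exp (2 * s) * ((C s *v (X s *v u)) \<bullet> (C s *v (X s *v w)))"

lemma D_cont: "continuous_on {0..} D"
  unfolding D_def
  by (intro continuous_intros mm_cont transpose_cont fm_cont[OF X] C)

lemma psi_cont: "continuous_on {0..} (psi u w)"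
  unfolding psi_def
  by (intro continuous_intros mv_cont fm_cont[OF X] C continuous_on_const)

lemma psi_int: "0 \<le> a \<Longrightarrow> psi u w integrable_on {a..b}"
  by (rule integrable_continuous_interval, rule continuous_on_subset[OF psi_cont]) auto

lemma H_der: "t \<ge> 0 \<Longrightarrow> (H has_vector_derivative D t) (at t within {0..})"
  unfolding H_def
  using has_vector_derivative_add[OF has_vector_derivative_const integral_vd_ge0[OF D_cont]] by simp

lemma H_cont: "continuous_on {0..} H"
  unfolding continuous_on_eq_continuous_within
  by (auto intro: has_vector_derivative_continuous H_der)

lemma H_bil: assumes "t \<ge> 0"
  shows "u \<bullet> (H t *v w) = (X 0 *v u) \<bullet> (X 0 *v w) + integral {0..t} (psi u w)"
proof -
  have int: "D integrable_on {0..t}"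
    by (rule integrable_continuous_interval, rule continuous_on_subset[OF D_cont]) auto
  have bl: "bounded_linear (\<lambda>N::real^'n^'n. u \<bullet> (N *v w))"
    by (intro bounded_linear_compose[OF bounded_linear_inner_right] bounded_bilinear.bounded_linear_left[OF bb_mv])
  have "u \<bullet> (integral {0..t} D *v w) = integral {0..t} ((\<lambda>N. u \<bullet> (N *v w)) \<circ> D)"
    by (rule integral_linear[OF int bl, symmetric])
  also have "\<dots> = integral {0..t} (psi u w)"
  proof (rule integral_cong)
    fix s
    show "((\<lambda>N. u \<bullet> (N *v w)) \<circ> D) s = psi u w s"
      unfolding D_def psi_def o_def
      by (simp add: mv_scale_l matrix_vector_mul_assoc[symmetric] inner_transpose
          del: transpose_matrix_vector)
  qed
  finally show ?thesis unfolding H_def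
    by (simp add: matrix_vector_mult_add_rdistrib inner_add_right matrix_vector_mul_assoc[symmetric] inner_transpose
          del: transpose_matrix_vector)
qed

lemma psi_sym: "psi u w = psi w u"
  unfolding psi_def by (simp add: fun_eq_iff inner_commute)

lemma H_sym: "t \<ge> 0 \<Longrightarrow> u \<bullet> (H t *v w) = w \<bullet> (H t *v u)"
  using H_bil[of t u w] H_bil[of t w u] psi_sym[of u w] by (simp add: inner_commute)

lemma psi_nonneg: "psi u u s \<ge> 0"
  unfolding psi_def by simp

lemma H_pos: "t \<ge> 0 \<Longrightarrow> (norm (X 0 *v u))^2 \<le> u \<bullet> (H t *v u)"
proof -
  assume t: "t \<ge> 0"
  have "0 \<le> integral {0..t} (psi u u)" by (rule integral_nonneg[OF psi_int[OF order_refl]]) (rule psi_nonneg)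
  then show ?thesis using H_bil[OF t, of u u] by (simp add: power2_norm_eq_inner)
qed

lemma H_mono: assumes "0 \<le> t0" "t0 \<le> t"
  shows "u \<bullet> (H t0 *v u) \<le> u \<bullet> (H t *v u)"
proof -
  have "integral {0..t0} (psi u u) \<le> integral {0..t} (psi u u)"
    by (rule integral_subset_le) (use assms in \<open>auto intro: psi_int psi_nonneg\<close>)
  then show ?thesis using H_bil[of t0 u u] H_bil[of t u u] assms by simp
qed

lemma H_inv: assumes "t \<ge> 0" shows "invertible (H t)"
proof (rule inj_invertible)
  fix v assume "H t *v v = 0"
  then have "(norm (X 0 *v v))^2 \<le> 0" using H_pos[OF assms, of v] by simp
  then have "X 0 *v v = 0" by simp
  then show "v = 0" using minv_vec(2)[OF fm_inv[OF X], of 0 v] by simp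
qed

lemma H_lin: "t \<ge> 0 \<Longrightarrow> u \<bullet> (H t *v (w1 - w2)) = u \<bullet> (H t *v w1) - u \<bullet> (H t *v w2)"
  by (simp add: matrix_vector_mult_diff_distrib inner_diff_right)

end

lemma exp_int: assumes "(t::real) \<ge> 0" shows "integral {0..t} (\<lambda>s. exp (2 * s)) = (exp (2 * t) - 1) / 2"
proof -
  have "((\<lambda>s. exp (2 * s)) has_integral (exp (2 * t) / 2 - exp (2 * 0) / 2)) {0..t}"
  proof (rule fundamental_theorem_of_calculus[OF assms])
    fix x :: real
    have "((\<lambda>s. exp (2 * s) / 2) has_real_derivative exp (2 * x)) (at x within {0..t})"
      by (auto intro!: derivative_eq_intros)
    then show "((\<lambda>s. exp (2 * s) / 2) has_vector_derivative exp (2 * x)) (at x within {0..t})"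
      by (simp add: has_real_derivative_iff_has_vector_derivative)
  qed
  then show ?thesis by (simp add: integral_unique diff_divide_distrib)
qed

lemma sq_aux:
  fixes k a \<sigma> nv n :: real
  assumes "k \<ge> 0" "a \<le> \<sigma>" "nv \<ge> 0" "n \<ge> 0" "nv \<le> exp (k * a) * n"
  shows "exp (- 2 * k * \<sigma>) * nv^2 \<le> n^2"
proof -
  have "exp (k * a) \<le> exp (k * \<sigma>)" using assms by (simp add: mult_left_mono)
  then have "nv \<le> exp (k * \<sigma>) * n" using assms by (meson mult_right_mono order_trans)
  then have "nv^2 \<le> (exp (k * \<sigma>) * n)^2" using assms by (intro power_mono) auto
  then have "exp (- 2 * k * \<sigma>) * nv^2 \<le> exp (- 2 * k * \<sigma>) * (exp (k * \<sigma>) * n)^2"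
    by (intro mult_left_mono) auto
  also have "\<dots> = (exp (- 2 * k * \<sigma>) * exp (k * \<sigma>) * exp (k * \<sigma>)) * n^2"
    by (simp add: power2_eq_square)
  also have "exp (- 2 * k * \<sigma>) * exp (k * \<sigma>) * exp (k * \<sigma>) = 1"
    by (simp add: exp_add[symmetric])
  finally show ?thesis by simp
qed

locale uco_bounds = uco_setup A C X for A :: "real \<Rightarrow> real^'n^'n" and C :: "real \<Rightarrow> real^'n^'p" and X +
  fixes K k c \<beta>1 \<sigma> :: real
  assumes bkK: "\<And>s t. 0 \<le> s \<Longrightarrow> s \<le> t \<Longrightarrow> norm (trans_mat X s t) \<le> K"
    and kA: "\<And>t. t \<ge> 0 \<Longrightarrow> norm (A t) \<le> k"
    and cC: "\<And>t. t \<ge> 0 \<Longrightarrow> norm (C t) \<le> c"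
    and \<beta>1: "\<beta>1 > 0" and \<sigma>: "\<sigma> > 0"
    and uco: "\<And>t0 w. t0 \<ge> 0 \<Longrightarrow> \<beta>1 * (w \<bullet> w) \<le> w \<bullet> (obs_gramian X C (t0 + \<sigma>) t0 *v w)"
begin

definition "G t = matrix_inv (X t)"
definition "qf t v = exp (- 2 * t) * ((G t *v v) \<bullet> (H t *v (G t *v v)))"
definition "phi t v s = exp (2 * s) * (norm (C s *v (trans_mat X s t *v v)))^2"
definition "nlow = exp (- 2 * \<sigma>) * exp (- 2 * k * \<sigma>) * min 1 \<beta>1"
definition "nup = K^2 + (c * K)^2 / 2"

lemma k0: "k \<ge> 0" using kA[of 0] norm_ge_zero[of "A 0"] by linarith
lemma c0: "c \<ge> 0" using cC[of 0] norm_ge_zero[of "C 0"] by linarith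
lemma K0: "K \<ge> 0" using bkK[of 0 0] norm_ge_zero[of "trans_mat X 0 0"] by linarith
lemma nlow_pos: "nlow > 0" using \<beta>1 by (simp add: nlow_def)
lemma nup_pos: "nup \<ge> 0" by (simp add: nup_def)

lemma XG: "s \<ge> 0 \<Longrightarrow> X s *v (G t *v v) = trans_mat X s t *v v"
  by (simp add: G_def trans_mat_def matrix_vector_mul_assoc)

lemma phi_eq: "phi t v = psi (G t *v v) (G t *v v)"
  unfolding phi_def psi_def fun_eq_iff
  by (auto simp: G_def trans_mat_def matrix_vector_mul_assoc power2_norm_eq_inner)

lemma qf_expand: assumes "t \<ge> 0"
  shows "(G t *v v) \<bullet> (H t *v (G t *v v)) = (norm (trans_mat X 0 t *v v))^2 + integral {0..t} (phi t v)"
  using H_bil[OF assms, of "G t *v v" "G t *v v"]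
  by (simp add: phi_eq XG power2_norm_eq_inner)

lemma phi_int: "0 \<le> a \<Longrightarrow> phi t v integrable_on {a..b}"
  unfolding phi_eq by (rule psi_int)

lemma phi_nonneg: "phi t v s \<ge> 0"
  unfolding phi_def by simp

lemma qf_upper: assumes t: "t \<ge> 0" shows "qf t v \<le> nup * (norm v)^2"
proof -
  have a: "(norm (trans_mat X 0 t *v v))^2 \<le> (K * norm v)^2"
    by (intro power_mono order_trans[OF norm_mv mult_right_mono[OF bkK[OF order_refl t] norm_ge_zero]]) auto
  have "integral {0..t} (phi t v) \<le> integral {0..t} (\<lambda>s. (c * K * norm v)^2 * exp (2 * s))"
  proof (rule integral_le[OF phi_int[OF order_refl]])
    show "(\<lambda>s. (c * K * norm v)^2 * exp (2 * s)) integrable_on {0..t}"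
      by (rule integrable_continuous_interval) (intro continuous_intros)
    fix s assume s: "s \<in> {0..t}"
    have "norm (C s *v (trans_mat X s t *v v)) \<le> c * (K * norm v)"
    proof -
      have "norm (C s *v (trans_mat X s t *v v)) \<le> norm (C s) * (norm (trans_mat X s t) * norm v)"
        by (meson norm_mv order_trans mult_left_mono norm_ge_zero)
      also have "\<dots> \<le> c * (K * norm v)"
        using s cC[of s] bkK[of s t] c0 K0 by (intro mult_mono) auto
      finally show ?thesis .
    qed
    then have "(norm (C s *v (trans_mat X s t *v v)))^2 \<le> (c * K * norm v)^2"
      by (intro power_mono) (auto simp: mult.assoc)
    then show "phi t v s \<le> (c * K * norm v)^2 * exp (2 * s)"
      unfolding phi_def by (simp add: mult.commute)
  qed
  also have "\<dots> = (c * K * norm v)^2 * ((exp (2 * t) - 1) / 2)"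
    using integral_mult[of "\<lambda>s. exp (2 * s)" "{0..t}" "(c * K * norm v)^2"] exp_int[OF t]
    by (simp add: integrable_continuous_interval continuous_intros)
  finally have b: "integral {0..t} (phi t v) \<le> (c * K * norm v)^2 * ((exp (2 * t) - 1) / 2)" .
  have e1: "exp (- 2 * t) \<le> 1" using t by simp
  have e2: "exp (- 2 * t) * exp (2 * t) = 1" by (simp add: exp_add[symmetric])
  have "qf t v = exp (- 2 * t) * (norm (trans_mat X 0 t *v v))^2 + exp (- 2 * t) * integral {0..t} (phi t v)"
    by (simp add: qf_def qf_expand[OF t] algebra_simps)
  also have "\<dots> \<le> 1 * (K * norm v)^2 + exp (- 2 * t) * ((c * K * norm v)^2 * ((exp (2 * t) - 1) / 2))"
    using a b e1 by (intro add_mono mult_mono mult_left_mono) auto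
  also have "exp (- 2 * t) * ((c * K * norm v)^2 * ((exp (2 * t) - 1) / 2)) = (c * K * norm v)^2 * ((1 - exp (- 2 * t)) / 2)"
    using e2 by (simp add: algebra_simps diff_divide_distrib)
  also have "\<dots> \<le> (c * K * norm v)^2 * (1 / 2)"
    by (intro mult_left_mono) auto
  finally show ?thesis by (simp add: nup_def power_mult_distrib algebra_simps)
qed

lemma qf_lower: assumes t: "t \<ge> 0" shows "nlow * (norm v)^2 \<le> qf t v"
proof -
  define n where "n = norm (trans_mat X 0 t *v v)"
  have int0: "0 \<le> integral {0..t} (phi t v)"
    by (rule integral_nonneg[OF phi_int[OF order_refl]]) (rule phi_nonneg)
  have qfe: "qf t v = exp (- 2 * t) * (n^2 + integral {0..t} (phi t v))"
    by (simp add: qf_def qf_expand[OF t] n_def)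
  have m1: "min 1 \<beta>1 \<le> 1" "min 1 \<beta>1 \<le> \<beta>1" "min 1 \<beta>1 \<ge> 0" using \<beta>1 by auto
  show ?thesis
  proof (cases "t \<le> \<sigma>")
    case True
    have "v = trans_mat X t 0 *v (trans_mat X 0 t *v v)"
      using trans_mat_comp[OF X order_refl, of t t] trans_mat_self[OF X t]
      by (simp add: matrix_vector_mul_assoc)
    then have "norm v \<le> exp (k * (t - 0)) * n"
      unfolding n_def by (metis growth[OF X kA order_refl t])
    then have sq: "exp (- 2 * k * \<sigma>) * (norm v)^2 \<le> n^2"
      by (intro sq_aux[OF k0 _ norm_ge_zero]) (use True in \<open>auto simp: n_def\<close>)
    have "nlow * (norm v)^2 = exp (- 2 * \<sigma>) * (min 1 \<beta>1 * (exp (- 2 * k * \<sigma>) * (norm v)^2))"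
      by (simp add: nlow_def algebra_simps)
    also have "\<dots> \<le> exp (- 2 * \<sigma>) * (1 * (exp (- 2 * k * \<sigma>) * (norm v)^2))"
      by (intro mult_left_mono mult_right_mono) (use m1 in auto)
    also have "\<dots> \<le> exp (- 2 * t) * n^2"
      using sq True by (intro mult_mono) auto
    also have "\<dots> \<le> qf t v" unfolding qfe using int0 by (intro mult_left_mono) auto
    finally show ?thesis .
  next
    case False
    define t1 where "t1 = t - \<sigma>"
    have t1: "t1 \<ge> 0" "t1 \<le> t" "t = t1 + \<sigma>" using False \<sigma> by (auto simp: t1_def)
    define w where "w = trans_mat X t1 t *v v"
    have phiw: "trans_mat X s t *v v = trans_mat X s t1 *v w" for s
      unfolding w_def using trans_mat_comp[OF X t1(1), of s t] by (simp add: matrix_vector_mul_assoc)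
    have "integral {t1..t} (phi t v) \<le> integral {0..t} (phi t v)"
      by (rule integral_subset_le) (use t1 in \<open>auto intro: phi_int phi_nonneg\<close>)
    moreover have "integral {t1..t} (\<lambda>s. exp (2 * t1) * (norm (C s *v (trans_mat X s t1 *v w)))^2) \<le> integral {t1..t} (phi t v)"
    proof (rule integral_le)
      show "(\<lambda>s. exp (2 * t1) * (norm (C s *v (trans_mat X s t1 *v w)))^2) integrable_on {t1..t}"
        by (intro integrable_continuous_interval continuous_intros quad_cont[OF X C t1(1)])
      show "phi t v integrable_on {t1..t}" by (rule phi_int[OF t1(1)])
      fix s assume "s \<in> {t1..t}"
      then show "exp (2 * t1) * (norm (C s *v (trans_mat X s t1 *v w)))^2 \<le> phi t v s"
        unfolding phi_def phiw by (intro mult_right_mono) auto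
    qed
    moreover have "integral {t1..t} (\<lambda>s. exp (2 * t1) * (norm (C s *v (trans_mat X s t1 *v w)))^2)
        = exp (2 * t1) * (w \<bullet> (obs_gramian X C (t1 + \<sigma>) t1 *v w))"
      unfolding gram_quad[OF X C t1(1)] t1(3)[symmetric]
      by (rule integral_mult[symmetric]) (intro integrable_continuous_interval quad_cont[OF X C t1(1)])
    moreover have "exp (2 * t1) * (\<beta>1 * (w \<bullet> w)) \<le> exp (2 * t1) * (w \<bullet> (obs_gramian X C (t1 + \<sigma>) t1 *v w))"
      using uco[OF t1(1), of w] by (intro mult_left_mono) auto
    ultimately have "exp (2 * t1) * (\<beta>1 * (w \<bullet> w)) \<le> integral {0..t} (phi t v)"
      by linarith
    then have I: "exp (2 * t1) * (\<beta>1 * (norm w)^2) \<le> integral {0..t} (phi t v)"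
      by (simp add: power2_norm_eq_inner)
    have "v = trans_mat X t t1 *v w"
      unfolding w_def using trans_mat_comp[OF X t1(1), of t t] trans_mat_self[OF X t]
      by (simp add: matrix_vector_mul_assoc)
    then have "norm v \<le> exp (k * (t - t1)) * norm w"
      by (metis growth[OF X kA t1(1) t1(2)])
    then have sq: "exp (- 2 * k * \<sigma>) * (norm v)^2 \<le> (norm w)^2"
      by (intro sq_aux[OF k0 _ norm_ge_zero norm_ge_zero]) (use t1 in auto)
    have "nlow * (norm v)^2 = exp (- 2 * \<sigma>) * (min 1 \<beta>1 * (exp (- 2 * k * \<sigma>) * (norm v)^2))"
      by (simp add: nlow_def algebra_simps)
    also have "\<dots> \<le> exp (- 2 * \<sigma>) * (\<beta>1 * (exp (- 2 * k * \<sigma>) * (norm v)^2))"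
      by (intro mult_left_mono mult_right_mono) (use m1 in auto)
    also have "\<dots> \<le> exp (- 2 * \<sigma>) * (\<beta>1 * (norm w)^2)"
      using sq \<beta>1 by (intro mult_left_mono) auto
    also have "exp (- 2 * \<sigma>) = exp (- 2 * t) * exp (2 * t1)"
      by (simp add: exp_add[symmetric] t1_def algebra_simps)
    also have "exp (- 2 * t) * exp (2 * t1) * (\<beta>1 * (norm w)^2) \<le> exp (- 2 * t) * integral {0..t} (phi t v)"
      using I by (simp add: mult.assoc mult_left_mono)
    also have "\<dots> \<le> qf t v" unfolding qfe by (intro mult_left_mono) auto
    finally show ?thesis .
  qed
qed

end

lemma mm_uminus_l: "(- (M::real^'n^'m)) ** (N::real^'k^'n) = - (M ** N)"
  by (simp add: matrix_matrix_mult_def vec_eq_iff sum_negf)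

lemma mm_uminus_r: "(M::real^'n^'m) ** (- (N::real^'k^'n)) = - (M ** N)"
  by (simp add: matrix_matrix_mult_def vec_eq_iff sum_negf)

context uco_bounds
begin

definition "Hi t = matrix_inv (H t)"
definition "LL t = exp (2 * t) *\<^sub>R (X t ** Hi t ** transpose (X t) ** transpose (C t))"
definition "Y t = X t ** Hi t"

lemma Hi_der: "t \<ge> 0 \<Longrightarrow> (Hi has_vector_derivative (- (Hi t ** D t ** Hi t))) (at t within {0..})"
  unfolding Hi_def by (rule has_vd_minv[OF H_der]) (auto intro: H_inv)

lemma Hi_cont: "continuous_on {0..} Hi"
  unfolding continuous_on_eq_continuous_within
  by (auto intro: has_vector_derivative_continuous Hi_der)

lemma LL_cont: "continuous_on {0..} LL"
  unfolding LL_def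
  by (intro continuous_intros mm_cont transpose_cont fm_cont[OF X] Hi_cont C)

lemma Y_fm: "fundamental_matrix (\<lambda>t. A t - LL t ** C t) Y"
  unfolding fundamental_matrix_def
proof (intro allI impI conjI)
  fix t :: real assume t: "t \<ge> 0"
  have "(Y has_vector_derivative (X t ** (- (Hi t ** D t ** Hi t)) + (A t ** X t) ** Hi t)) (at t within {0..})"
    unfolding Y_def by (intro mm_vd fm_der[OF X t] Hi_der[OF t])
  moreover have "X t ** (- (Hi t ** D t ** Hi t)) + (A t ** X t) ** Hi t = (A t - LL t ** C t) ** Y t"
    unfolding Y_def LL_def D_def
    by (simp add: mm_uminus_r mm_diff_rdistrib mm_scale_l mm_scale_r matrix_mul_assoc)
  ultimately show "(Y has_vector_derivative ((A t - LL t ** C t) ** Y t)) (at t within {0..})" by simp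
  show "invertible (Y t)" unfolding Y_def Hi_def
    by (intro invertible_mult fm_inv[OF X t] invertible_minv H_inv t)
qed

lemma GX: "t \<ge> 0 \<Longrightarrow> G t *v (X t *v v) = v"
  unfolding G_def by (rule minv_vec(2)[OF fm_inv[OF X]])

lemma HHi: "t \<ge> 0 \<Longrightarrow> H t *v (Hi t *v v) = v"
  unfolding Hi_def by (rule minv_vec(1)[OF H_inv])

lemma HiH: "t \<ge> 0 \<Longrightarrow> Hi t *v (H t *v v) = v"
  unfolding Hi_def by (rule minv_vec(2)[OF H_inv])

lemma LL_bound: assumes t: "t \<ge> 0"
  shows "norm (LL t) \<le> real CARD('n) * real CARD('p) * (c / nlow)"
proof (rule norm_mat_le_cols)
  fix z :: "real^'p"
  define u where "u = transpose (C t) *v z"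
  define y where "y = Hi t *v (transpose (X t) *v u)"
  define w where "w = LL t *v z"
  have w: "w = exp (2 * t) *\<^sub>R (X t *v y)"
    by (simp add: w_def LL_def y_def u_def mv_scale_l matrix_vector_mul_assoc matrix_mul_assoc del: transpose_matrix_vector)
  have Gw: "G t *v w = exp (2 * t) *\<^sub>R y" by (simp add: w matrix_vector_mult_scaleR GX[OF t])
  have Hy: "H t *v y = transpose (X t) *v u" by (simp add: y_def HHi[OF t])
  have "qf t w = exp (- 2 * t) * (exp (2 * t) * exp (2 * t)) * (y \<bullet> (transpose (X t) *v u))"
    by (simp add: qf_def Gw matrix_vector_mult_scaleR Hy)
  also have "exp (- 2 * t) * (exp (2 * t) * exp (2 * t)) = exp (2 * t)"
    by (simp add: exp_add[symmetric])
  also have "exp (2 * t) * (y \<bullet> (transpose (X t) *v u)) = w \<bullet> u"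
    by (simp add: w inner_transpose del: transpose_matrix_vector)
  finally have "qf t w = w \<bullet> u" .
  then have "nlow * (norm w)^2 \<le> norm w * norm u"
    using qf_lower[OF t, of w] Cauchy_Schwarz_ineq2[of w u] by (simp add: abs_le_iff)
  then have nw: "nlow * norm w \<le> norm u"
    using nlow_pos by (cases "norm w = 0") (auto simp: power2_eq_square)
  have nu: "norm u \<le> c * norm z"
    unfolding u_def by (metis norm_mv norm_transpose cC[OF t] mult_right_mono norm_ge_zero order_trans)
  have "norm w \<le> c * norm z / nlow" using nw nu nlow_pos by (simp add: field_simps)
  then show "norm (LL t *v z) \<le> c / nlow * norm z" by (simp add: w_def)
qed

lemma Hi_mono: assumes "0 \<le> t0" "t0 \<le> t"
  shows "(Hi t *v cc) \<bullet> cc \<le> (Hi t0 *v cc) \<bullet> cc"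
proof -
  have t: "t \<ge> 0" using assms by linarith
  define u where "u = Hi t *v cc"
  define u0 where "u0 = Hi t0 *v cc"
  have Hu: "H t *v u = cc" by (simp add: u_def HHi[OF t])
  have Hu0: "H t0 *v u0 = cc" by (simp add: u0_def HHi[OF assms(1)])
  have "u \<bullet> (H t0 *v u) \<le> u \<bullet> (H t *v u)" by (rule H_mono[OF assms])
  then have a: "u \<bullet> (H t0 *v u) \<le> u \<bullet> cc" by (simp add: Hu)
  have "0 \<le> (u - u0) \<bullet> (H t0 *v (u - u0))"
    using H_pos[OF assms(1), of "u - u0"] by (meson order_trans zero_le_power2)
  also have "\<dots> = u \<bullet> (H t0 *v u) - u \<bullet> (H t0 *v u0) - (u0 \<bullet> (H t0 *v u) - u0 \<bullet> (H t0 *v u0))"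
    by (simp add: inner_diff_left matrix_vector_mult_diff_distrib inner_diff_right)
  also have "u0 \<bullet> (H t0 *v u) = u \<bullet> (H t0 *v u0)" by (rule H_sym[OF assms(1)])
  finally have "0 \<le> u \<bullet> (H t0 *v u) - 2 * (u \<bullet> cc) + u0 \<bullet> cc" by (simp add: Hu0)
  with a show ?thesis by (simp add: u_def u0_def)
qed

lemma Y_trans: assumes "0 \<le> t0" shows "trans_mat Y t t0 = X t ** Hi t ** (H t0 ** G t0)"
proof -
  have "matrix_inv (X t0 ** Hi t0) = matrix_inv (Hi t0) ** matrix_inv (X t0)"
    unfolding Hi_def by (rule minv_mult[OF fm_inv[OF X assms] invertible_minv[OF H_inv[OF assms]]])
  also have "matrix_inv (Hi t0) = H t0" unfolding Hi_def by (rule minv_minv[OF H_inv[OF assms]])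
  finally show ?thesis by (simp add: trans_mat_def Y_def G_def)
qed

definition "RR = nup / nlow + 1"

lemma Y_vec_bound: assumes t0: "0 \<le> t0" "t0 \<le> t"
  shows "norm (trans_mat Y t t0 *v e0) \<le> RR * exp (- (t - t0)) * norm e0"
proof -
  have t: "t \<ge> 0" using t0 by linarith
  define cc where "cc = H t0 *v (G t0 *v e0)"
  define e where "e = trans_mat Y t t0 *v e0"
  have e: "e = X t *v (Hi t *v cc)"
    by (simp add: e_def cc_def Y_trans[OF t0(1)] matrix_vector_mul_assoc matrix_mul_assoc)
  have "qf t e = exp (- 2 * t) * ((Hi t *v cc) \<bullet> cc)"
    by (simp add: qf_def e GX[OF t] HHi[OF t])
  also have "\<dots> \<le> exp (- 2 * t) * ((Hi t0 *v cc) \<bullet> cc)"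
    by (intro mult_left_mono Hi_mono t0) simp
  also have "\<dots> = exp (- 2 * (t - t0)) * qf t0 e0"
  proof -
    have "Hi t0 *v cc = G t0 *v e0" by (simp add: cc_def HiH[OF t0(1)])
    then have "qf t0 e0 = exp (- 2 * t0) * ((Hi t0 *v cc) \<bullet> cc)"
      by (simp add: qf_def cc_def)
    moreover have "exp (- 2 * t) = exp (- 2 * (t - t0)) * exp (- 2 * t0)"
      by (simp add: exp_add[symmetric] algebra_simps)
    ultimately show ?thesis by simp
  qed
  also have "\<dots> \<le> exp (- 2 * (t - t0)) * (nup * (norm e0)^2)"
    by (intro mult_left_mono qf_upper t0) simp
  finally have "nlow * (norm e)^2 \<le> exp (- 2 * (t - t0)) * (nup * (norm e0)^2)"
    using qf_lower[OF t, of e] by linarith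
  then have "(norm e)^2 \<le> (nup / nlow) * (exp (- 2 * (t - t0)) * (norm e0)^2)"
    using nlow_pos by (simp add: field_simps)
  also have "\<dots> \<le> RR^2 * (exp (- 2 * (t - t0)) * (norm e0)^2)"
  proof (rule mult_right_mono)
    have "nup / nlow \<ge> 0" using nup_pos nlow_pos by simp
    then have "RR \<ge> 1" "nup / nlow \<le> RR" by (auto simp: RR_def)
    moreover have "RR * 1 \<le> RR * RR" by (rule mult_left_mono) (use \<open>RR \<ge> 1\<close> in auto)
    ultimately show "nup / nlow \<le> RR^2" unfolding power2_eq_square by linarith
  qed simp
  also have "\<dots> = (RR * exp (- (t - t0)) * norm e0)^2"
  proof -
    have "exp (- 2 * (t - t0)) = exp (- (t - t0)) * exp (- (t - t0))" by (simp add: exp_add[symmetric])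
    then show ?thesis by (simp add: power_mult_distrib power2_eq_square)
  qed
  finally show ?thesis unfolding e_def
    by (rule power2_le_imp_le) (use nup_pos nlow_pos in \<open>simp add: RR_def\<close>)
qed

lemma Y_ues: "unif_exp_stable (\<lambda>t. A t - LL t ** C t)"
proof -
  define K' where "K' = real CARD('n) * real CARD('n) * RR"
  have RR1: "RR \<ge> 1" using nup_pos nlow_pos by (simp add: RR_def)
  have "real CARD('n) \<ge> 1" by (simp add: Suc_le_eq)
  then have "real CARD('n) * real CARD('n) \<ge> 1 * 1" by (intro mult_mono) auto
  then have "(real CARD('n) * real CARD('n)) * 1 \<le> (real CARD('n) * real CARD('n)) * RR"
    using RR1 by (intro mult_left_mono) auto
  then have K': "K' \<ge> 1" unfolding K'_def using \<open>real CARD('n) * real CARD('n) \<ge> 1 * 1\<close> by linarith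
  show ?thesis unfolding unif_exp_stable_def
  proof (rule exI[of _ Y], rule conjI[OF Y_fm], rule exI[of _ 1], rule conjI, simp, rule exI[of _ K'], rule conjI[OF K'], intro allI impI)
    fix t0 t :: real assume "t0 \<ge> 0" "t \<ge> t0"
    have "norm (trans_mat Y t t0) \<le> real CARD('n) * real CARD('n) * (RR * exp (- (t - t0)))"
      by (rule norm_mat_le_cols) (use Y_vec_bound \<open>t0 \<ge> 0\<close> \<open>t \<ge> t0\<close> in auto)
    then show "norm (trans_mat Y t t0) \<le> K' * exp (- 1 * (t - t0))" by (simp add: K'_def mult.assoc)
  qed
qed

lemma detectable: "unif_exp_detectable A C"
  unfolding unif_exp_detectable_def
proof (intro exI[of _ LL] conjI LL_cont Y_ues)
  show "uniformly_bounded LL"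
    unfolding uniformly_bounded_def bounded_iff using LL_bound by blast
qed

end

theorem proposition1:
  fixes A :: "real \<Rightarrow> real^'n^'n" and C :: "real \<Rightarrow> real^'n^'p"
  assumes "continuous_on {0..} A" and "continuous_on {0..} C"
    and "uniformly_bounded A" and "uniformly_bounded C"
    and "exp_dichotomy A (mat 0)"
  shows "unif_exp_detectable A C \<longleftrightarrow> unif_complete_obs A C"
proof -
  obtain k where kA: "\<And>t. t \<ge> 0 \<Longrightarrow> norm (A t) \<le> k"
    using assms(3) unfolding uniformly_bounded_def bounded_iff by auto
  obtain c where cC: "\<And>t. t \<ge> 0 \<Longrightarrow> norm (C t) \<le> c"
    using assms(4) unfolding uniformly_bounded_def bounded_iff by auto
  have m10: "mat 1 - mat 0 = (mat 1 :: real^'n^'n)" by (simp add: mat_def vec_eq_iff)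
  obtain K \<alpha> Xd where K: "K \<ge> 1" and \<alpha>: "\<alpha> > 0" and Xd: "fundamental_matrix A Xd"
    and bk0: "\<And>t0 t. 0 \<le> t \<Longrightarrow> t \<le> t0 \<Longrightarrow> norm (Xd t ** (mat 1 - mat 0) ** matrix_inv (Xd t0)) \<le> K * exp (\<alpha> * (t - t0))"
    using assms(5) unfolding exp_dichotomy_def by blast
  have bk: "norm (trans_mat Xd t t0) \<le> K * exp (\<alpha> * (t - t0))" if "0 \<le> t" "t \<le> t0" for t t0
    using bk0[OF that] by (simp add: m10 trans_mat_def)
  show ?thesis
  proof
    assume "unif_exp_detectable A C"
    then obtain L :: "real \<Rightarrow> real^'p^'n" where Lb: "uniformly_bounded L"
      and st: "unif_exp_stable (\<lambda>t. A t - L t ** C t)"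
      unfolding unif_exp_detectable_def by blast
    obtain l0 where l0: "\<And>t. t \<ge> 0 \<Longrightarrow> norm (L t) \<le> l0"
      using Lb unfolding uniformly_bounded_def bounded_iff by auto
    obtain Y \<mu> K1 where Y: "fundamental_matrix (\<lambda>t. A t - L t ** C t) Y" and \<mu>: "\<mu> > 0" and K1: "K1 \<ge> 1"
      and YK0: "\<And>t0 t. 0 \<le> t0 \<Longrightarrow> t0 \<le> t \<Longrightarrow> norm (trans_mat Y t t0) \<le> K1 * exp (- \<mu> * (t - t0))"
      using st unfolding unif_exp_stable_def by blast
    have YK: "norm (trans_mat Y t t0) \<le> K1" if "0 \<le> t0" "t0 \<le> t" for t0 t
    proof -
      have "exp (- \<mu> * (t - t0)) \<le> 1" using \<mu> that by (simp add: mult_nonneg_nonneg)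
      then have "K1 * exp (- \<mu> * (t - t0)) \<le> K1 * 1" using K1 by (intro mult_left_mono) auto
      then show ?thesis using YK0[OF that] by simp
    qed
    show "unif_complete_obs A C"
    proof (rule det_imp_uco[OF Xd bk K \<alpha> kA assms(2) cC _ _ Y YK K1])
      show "\<And>t. t \<ge> 0 \<Longrightarrow> norm (L t) \<le> \<bar>l0\<bar> + 1" using l0 by fastforce
      show "\<bar>l0\<bar> + 1 > 0" by simp
    qed
  next
    assume "unif_complete_obs A C"
    then obtain X \<beta>1 \<beta>2 \<sigma> where X: "fundamental_matrix A X" and \<beta>1: "\<beta>1 > 0" and \<sigma>: "\<sigma> > 0"
      and uco: "\<And>t0 w. t0 \<ge> 0 \<Longrightarrow> \<beta>1 * (w \<bullet> w) \<le> w \<bullet> (obs_gramian X C (t0 + \<sigma>) t0 *v w)"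
      unfolding unif_complete_obs_def by blast
    have bkK: "norm (trans_mat X s t) \<le> K" if "0 \<le> s" "s \<le> t" for s t
    proof -
      have "trans_mat X s t = trans_mat Xd s t" using that by (intro fm_unique[OF Xd X]) auto
      moreover have "exp (\<alpha> * (s - t)) \<le> 1" using \<alpha> that by (simp add: mult_nonneg_nonpos)
      then have "K * exp (\<alpha> * (s - t)) \<le> K * 1" using K by (intro mult_left_mono) auto
      ultimately show ?thesis using bk[OF that] by simp
    qed
    have "uco_bounds A C X K k c \<beta>1 \<sigma>"
      unfolding uco_bounds_def uco_setup_def uco_bounds_axioms_def
      using X assms(2) bkK kA cC \<beta>1 \<sigma> uco by blast
    then show "unif_exp_detectable A C" by (rule uco_bounds.detectable)
  qed
qed

end
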